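(* Let $X$ and $Y$ be topological vector spaces (over $\mathbb{R}$), let $\theta$ be the origin of $Y$, let $D$ be a nonempty convex subset of $X$, and let $K$ be a nonempty set. Let $F: D\times K \rightrightarrows Y$ and $G: D\times D\rightrightarrows Y$ be set-valued mappings satisfying: (i) for each $y\in K$, the set $\{x\in D: \theta\in F(x,y)\}$ is compactly closed; (ii) $G$ is a KKM-type mapping on $D$; (iii) for each $y\in K$ there exists $z\in D$ such that for all $x\in D$, $\theta\in G(z,x)$ implies $\theta\in F(x,y)$; (iv) there exist a nonempty compact subset $M$ of $D$ and a finite subset $L$ of $K$ such that for each $x\in D\setminus M$ there exists $y\in L$ with $\theta\notin F(x,y)$. Then there exists $\bar x\in M$ such that $\theta\in F(\bar x,y)$ for all $y\in K$.
   Context: A subset $A$ of a topological space $X$ is compactly closed if for every compact subset $M$ of $X$ the set $A\cap M$ is closed in $M$. A set-valued mapping $G: D\times D\rightrightarrows Y$ is called a KKM-type mapping on $D$ if for every finite subset $\{x_1,\dots,x_n\}\subset D$ and every $x\in \operatorname{co}\{x_1,\dots,x_n\}\cap D$ there exists $j\in\{1,\dots,n\}$ such that $\theta\in G(x_j,x)$. Here $\operatorname{co}$ denotes the convex hull. *)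

theory Defs
  imports "HOL-Analysis.Analysis"
begin

definition tvs :: "'a::{real_vector, topological_space} itself \<Rightarrow> bool" where
  "tvs _ \<longleftrightarrow>
     continuous_on (UNIV :: ('a \<times> 'a) set) (\<lambda>(u, v). u + v) \<and>
     continuous_on (UNIV :: (real \<times> 'a) set) (\<lambda>(c, v). c *\<^sub>R v)"

definition compactly_closed :: "'a::topological_space set \<Rightarrow> bool" where
  "compactly_closed A \<longleftrightarrow> (\<forall>M. compact M \<longrightarrow> closedin (top_of_set M) (A \<inter> M))"

definition KKM_type :: "'a::real_vector set \<Rightarrow> ('a \<Rightarrow> 'a \<Rightarrow> 'b::zero set) \<Rightarrow> bool" where
  "KKM_type D G \<longleftrightarrow>
     (\<forall>A. finite A \<and> A \<subseteq> D \<longrightarrow> (\<forall>x \<in> convex hull A \<inter> D. \<exists>a\<in>A. 0 \<in> G a x))"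

end

theory Submission
  imports Defs "HOL-Homology.Brouwer_Degree"
begin

lemma nsphere_eq: "nsphere m = top_of_set {x. (\<Sum>i\<le>m. x i ^ 2) = 1 \<and> (\<forall>i>m. x i = 0)}"
  by (simp add: nsphere euclidean_product_topology)

lemma nz_cont:
  fixes V :: "'a::topological_space \<Rightarrow> nat \<Rightarrow> real"
  assumes "continuous_on A V" "\<And>p. p \<in> A \<Longrightarrow> (\<Sum>j\<le>m. (V p j)^2) \<noteq> 0"
  shows "continuous_on A (\<lambda>p i. V p i / sqrt (\<Sum>j\<le>m. (V p j)^2))"
proof (rule continuous_on_coordinatewise_then_product)
  fix i
  have c: "\<And>j. continuous_on A (\<lambda>p. V p j)"
    by (rule continuous_on_product_then_coordinatewise[OF assms(1)])
  show "continuous_on A (\<lambda>p. V p i / sqrt (\<Sum>j\<le>m. (V p j)^2))"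
    using assms(2) by (intro continuous_intros c) auto
qed

lemma nz_mem:
  fixes v :: "nat \<Rightarrow> real"
  assumes "\<forall>i>m. v i = 0" "(\<Sum>j\<le>m. (v j)^2) \<noteq> 0"
  shows "(\<lambda>i. v i / sqrt (\<Sum>j\<le>m. (v j)^2)) \<in> {x. (\<Sum>i\<le>m. x i ^ 2) = 1 \<and> (\<forall>i>m. x i = 0)}"
proof -
  define S where "S = (\<Sum>j\<le>m. (v j)^2)"
  have S0: "S > 0" using assms(2) unfolding S_def by (metis less_eq_real_def sum_nonneg zero_le_power2)
  have "(\<Sum>i\<le>m. (v i / sqrt S) ^ 2) = (\<Sum>i\<le>m. (v i)^2) / S"
    using S0 by (simp add: power_divide sum_divide_distrib)
  also have "\<dots> = 1" using S0 by (simp add: S_def)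
  finally show ?thesis using assms(1) by (simp add: S_def)
qed

lemma brouwer_ball_nat:
  fixes f :: "(nat \<Rightarrow> real) \<Rightarrow> (nat \<Rightarrow> real)"
  assumes contf: "continuous_on {x. (\<forall>i>m. x i = 0) \<and> (\<Sum>i\<le>m. (x i)^2) \<le> 1} f"
    and fim: "f ` {x. (\<forall>i>m. x i = 0) \<and> (\<Sum>i\<le>m. (x i)^2) \<le> 1} \<subseteq> {x. (\<forall>i>m. x i = 0) \<and> (\<Sum>i\<le>m. (x i)^2) \<le> 1}"
  shows "\<exists>x\<in>{x. (\<forall>i>m. x i = 0) \<and> (\<Sum>i\<le>m. (x i)^2) \<le> 1}. f x = x"
proof (rule ccontr)
  define Bl where "Bl = {x::nat\<Rightarrow>real. (\<forall>i>m. x i = 0) \<and> (\<Sum>i\<le>m. (x i)^2) \<le> 1}"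
  define Sph where "Sph = {x::nat\<Rightarrow>real. (\<Sum>i\<le>m. x i ^ 2) = 1 \<and> (\<forall>i>m. x i = 0)}"
  define nz where "nz = (\<lambda>v::nat\<Rightarrow>real. \<lambda>i. v i / sqrt (\<Sum>j\<le>m. (v j)^2))"
  assume "\<not> ?thesis"
  then have nofix: "\<And>x. x \<in> Bl \<Longrightarrow> f x \<noteq> x" unfolding Bl_def by blast
  have contf': "continuous_on Bl f" using contf unfolding Bl_def .
  have fB: "\<And>x. x \<in> Bl \<Longrightarrow> f x \<in> Bl" using fim unfolding Bl_def by blast
  have SB: "Sph \<subseteq> Bl" unfolding Sph_def Bl_def by auto
  have sq0: "(\<Sum>j\<le>m. (v j)^2) = 0 \<Longrightarrow> j \<le> m \<Longrightarrow> v j = 0" for v :: "nat \<Rightarrow> real" and j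
    by (subst (asm) sum_nonneg_eq_0_iff) auto
  have nzS: "x \<in> Sph \<Longrightarrow> nz x = x" for x
    unfolding Sph_def nz_def by auto
  define V1 where "V1 = (\<lambda>p::real \<times> (nat \<Rightarrow> real). \<lambda>i. snd p i - fst p * f (snd p) i)"
  have V1nz: "(\<Sum>j\<le>m. (V1 p j)^2) \<noteq> 0" if p: "p \<in> {0..1} \<times> Sph" for p
  proof
    assume h: "(\<Sum>j\<le>m. (V1 p j)^2) = 0"
    obtain t x where tx: "p = (t, x)" "t \<in> {0..1}" "x \<in> Sph" using p by auto
    have fx: "f x \<in> Bl" using fB SB tx(3) by auto
    have xeq: "x = (\<lambda>j. t * f x j)"
    proof
      fix j show "x j = t * f x j"
      proof (cases "j \<le> m")
        case True then show ?thesis using sq0[OF h True] tx by (simp add: V1_def)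
      next
        case False then show ?thesis using tx(3) fx by (simp add: Sph_def Bl_def)
      qed
    qed
    have "1 = (\<Sum>j\<le>m. (x j)^2)" using tx(3) by (simp add: Sph_def)
    also have "\<dots> = t^2 * (\<Sum>j\<le>m. (f x j)^2)"
      by (subst xeq) (simp add: power_mult_distrib sum_distrib_left)
    also have "\<dots> \<le> t^2 * 1" using fx tx(2) by (intro mult_left_mono) (auto simp: Bl_def)
    finally have "1 \<le> t^2" by simp
    moreover have "t * t \<le> t * 1" using tx(2) by (intro mult_left_mono) auto
    ultimately have "t = 1" using tx(2) by (simp add: power2_eq_square)
    then have "x = f x" using xeq by simp
    then show False using nofix SB tx(3) by (metis subsetD)
  qed
  have V1c: "continuous_on ({0..1::real} \<times> Sph) V1"
  proof -
    have cf: "continuous_on ({0..1::real} \<times> Sph) (\<lambda>p. f (snd p))"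
      by (rule continuous_on_compose2[OF contf' continuous_on_snd]) (use SB in auto)
    have cfi: "continuous_on ({0..1::real} \<times> Sph) (\<lambda>p. f (snd p) i)" for i
      by (rule continuous_on_product_then_coordinatewise[OF cf])
    have csi: "continuous_on ({0..1::real} \<times> Sph) (\<lambda>p. snd p i)" for i
      by (rule continuous_on_product_then_coordinatewise[OF continuous_on_snd[OF continuous_on_id]])
    show ?thesis unfolding V1_def
      by (intro continuous_on_coordinatewise_then_product continuous_intros cfi csi continuous_on_id)
  qed
  have H1: "homotopic_with (\<lambda>x. True) (nsphere m) (nsphere m) id (\<lambda>x. nz (\<lambda>i. x i - f x i))"
  proof (subst homotopic_with, simp, intro exI conjI ballI)
    show "continuous_map (prod_topology (top_of_set {0..1}) (nsphere m)) (nsphere m) (\<lambda>p. nz (V1 p))"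
      unfolding nsphere_eq Sph_def[symmetric] prod_topology_subtopology_eu continuous_map_subtopology_eu
    proof
      show "continuous_on ({0..1::real} \<times> Sph) (\<lambda>p. nz (V1 p))"
        unfolding nz_def by (rule nz_cont[OF V1c V1nz])
      show "(\<lambda>p. nz (V1 p)) \<in> {0..1} \<times> Sph \<rightarrow> Sph"
      proof
        fix p :: "real \<times> (nat \<Rightarrow> real)" assume p: "p \<in> {0..1} \<times> Sph"
        have "\<forall>i>m. V1 p i = 0" using p fB SB by (auto simp: V1_def Sph_def Bl_def)
        then show "nz (V1 p) \<in> Sph" unfolding nz_def Sph_def by (rule nz_mem[OF _ V1nz[OF p]])
      qed
    qed
  next
    fix x assume "x \<in> topspace (nsphere m)"
    then have x: "x \<in> Sph" by (simp add: nsphere_eq Sph_def)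
    show "nz (V1 (0, x)) = id x" using nzS[OF x] by (simp add: V1_def)
    show "nz (V1 (1, x)) = nz (\<lambda>i. x i - f x i)" by (simp add: V1_def)
  qed auto
  define Y where "Y = (\<lambda>p::real \<times> (nat \<Rightarrow> real). \<lambda>j. (1 - fst p) * snd p j)"
  define V2 where "V2 = (\<lambda>p::real \<times> (nat \<Rightarrow> real). \<lambda>i. Y p i - f (Y p) i)"
  have YB: "Y p \<in> Bl" if p: "p \<in> {0..1} \<times> Sph" for p
  proof -
    obtain t x where tx: "p = (t, x)" "t \<in> {0..1}" "x \<in> Sph" using p by auto
    have "(\<Sum>j\<le>m. ((1 - t) * x j)^2) = (1-t)^2 * (\<Sum>j\<le>m. (x j)^2)"
      by (simp add: power_mult_distrib sum_distrib_left)
    also have "\<dots> = (1-t)^2" using tx(3) by (simp add: Sph_def)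
    also have "\<dots> \<le> 1" using tx(2) by (simp add: abs_le_iff power_le_one)
    finally show ?thesis using tx by (auto simp: Y_def Bl_def Sph_def)
  qed
  have V2nz: "(\<Sum>j\<le>m. (V2 p j)^2) \<noteq> 0" if p: "p \<in> {0..1} \<times> Sph" for p
  proof
    assume h: "(\<Sum>j\<le>m. (V2 p j)^2) = 0"
    have fy: "f (Y p) \<in> Bl" using fB YB[OF p] by auto
    have "Y p = f (Y p)"
    proof
      fix j show "Y p j = f (Y p) j"
      proof (cases "j \<le> m")
        case True then show ?thesis using sq0[OF h True] by (simp add: V2_def)
      next
        case False then show ?thesis using YB[OF p] fy by (simp add: Bl_def)
      qed
    qed
    then show False using nofix YB[OF p] by metis
  qed
  have V2c: "continuous_on ({0..1::real} \<times> Sph) V2"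
  proof -
    have csi: "continuous_on ({0..1::real} \<times> Sph) (\<lambda>p. snd p i)" for i
      by (rule continuous_on_product_then_coordinatewise[OF continuous_on_snd[OF continuous_on_id]])
    have cY: "continuous_on ({0..1::real} \<times> Sph) Y" unfolding Y_def
      by (intro continuous_on_coordinatewise_then_product continuous_intros csi)
    have cYi: "continuous_on ({0..1::real} \<times> Sph) (\<lambda>p. Y p i)" for i
      by (rule continuous_on_product_then_coordinatewise[OF cY])
    have cf: "continuous_on ({0..1::real} \<times> Sph) (\<lambda>p. f (Y p))"
      by (rule continuous_on_compose2[OF contf' cY]) (use YB in auto)
    have cfi: "continuous_on ({0..1::real} \<times> Sph) (\<lambda>p. f (Y p) i)" for i
      by (rule continuous_on_product_then_coordinatewise[OF cf])
    show ?thesis unfolding V2_def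
      by (intro continuous_on_coordinatewise_then_product continuous_intros cfi cYi)
  qed
  have H2: "homotopic_with (\<lambda>x. True) (nsphere m) (nsphere m) (\<lambda>x. nz (\<lambda>i. x i - f x i)) (\<lambda>x. nz (V2 (1, x)))"
  proof (subst homotopic_with, simp, intro exI conjI ballI)
    show "continuous_map (prod_topology (top_of_set {0..1}) (nsphere m)) (nsphere m) (\<lambda>p. nz (V2 p))"
      unfolding nsphere_eq Sph_def[symmetric] prod_topology_subtopology_eu continuous_map_subtopology_eu
    proof
      show "continuous_on ({0..1::real} \<times> Sph) (\<lambda>p. nz (V2 p))"
        unfolding nz_def by (rule nz_cont[OF V2c V2nz])
      show "(\<lambda>p. nz (V2 p)) \<in> {0..1} \<times> Sph \<rightarrow> Sph"
      proof
        fix p :: "real \<times> (nat \<Rightarrow> real)" assume p: "p \<in> {0..1} \<times> Sph"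
        have "\<forall>i>m. V2 p i = 0" using YB[OF p] fB[OF YB[OF p]] by (auto simp: V2_def Bl_def)
        then show "nz (V2 p) \<in> Sph" unfolding nz_def Sph_def by (rule nz_mem[OF _ V2nz[OF p]])
      qed
    qed
  next
    fix x assume "x \<in> topspace (nsphere m)"
    show "nz (V2 (0, x)) = nz (\<lambda>i. x i - f x i)" by (simp add: V2_def Y_def)
    show "nz (V2 (1, x)) = nz (V2 (1, x))" ..
  qed auto
  have "V2 (1, x) = (\<lambda>i. - f (\<lambda>j. 0) i)" for x by (simp add: V2_def Y_def)
  then have "homotopic_with (\<lambda>x. True) (nsphere m) (nsphere m) id (\<lambda>x. nz (\<lambda>i. - f (\<lambda>j. 0) i))"
    using homotopic_with_trans[OF H1 H2] by simp
  then have "contractible_space (nsphere m)" unfolding contractible_space_def by blast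
  then show False using non_contractible_space_nsphere by blast
qed

definition TT :: "nat \<Rightarrow> (nat \<Rightarrow> real) set" where
  "TT m = {x. (\<forall>i\<ge>m. x i = 0) \<and> (\<forall>i<m. 0 \<le> x i) \<and> (\<Sum>i<m. x i) \<le> 1}"

definition bw :: "nat \<Rightarrow> nat \<Rightarrow> (nat \<Rightarrow> real) \<Rightarrow> real" where
  "bw m k x = (if k = 0 then 1 - (\<Sum>i<m. x i) else x (k - 1))"

lemma TT_le1: "x \<in> TT m \<Longrightarrow> i < m \<Longrightarrow> x i \<le> 1"
proof -
  assume x: "x \<in> TT m" and i: "i < m"
  have "x i \<le> (\<Sum>j<m. x j)" using x i by (intro member_le_sum) (auto simp: TT_def)
  then show ?thesis using x by (auto simp: TT_def)
qed

lemma TT_ball: "x \<in> TT m \<Longrightarrow> x \<in> {x. (\<forall>i>m. x i = 0) \<and> (\<Sum>i\<le>m. (x i)^2) \<le> 1}"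
proof -
  assume x: "x \<in> TT m"
  have "(\<Sum>i\<le>m. (x i)^2) = (\<Sum>i<m. (x i)^2) + (x m)^2"
    by (simp add: lessThan_Suc_atMost[symmetric])
  also have "\<dots> = (\<Sum>i<m. (x i)^2)" using x by (simp add: TT_def)
  also have "\<dots> \<le> (\<Sum>i<m. x i)"
  proof (rule sum_mono)
    fix i assume "i \<in> {..<m}"
    then have "0 \<le> x i" "x i \<le> 1" using x TT_le1[OF x] by (auto simp: TT_def)
    then show "(x i)^2 \<le> x i" by (simp add: power2_eq_square mult_left_le)
  qed
  also have "\<dots> \<le> 1" using x by (simp add: TT_def)
  finally show ?thesis using x by (auto simp: TT_def)
qed

lemma brouwer_TT:
  assumes contf: "continuous_on (TT m) f" and fim: "f ` TT m \<subseteq> TT m"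
  shows "\<exists>x\<in>TT m. f x = x"
proof -
  define r where "r = (\<lambda>x::nat\<Rightarrow>real. \<lambda>i. if i < m then max (x i) 0 / max 1 (\<Sum>j<m. max (x j) 0) else 0)"
  have rT: "r x \<in> TT m" for x
  proof -
    have "(\<Sum>i<m. r x i) = (\<Sum>i<m. max (x i) 0) / max 1 (\<Sum>j<m. max (x j) 0)"
      by (simp add: r_def sum_divide_distrib)
    also have "\<dots> \<le> 1" by (simp add: divide_le_eq_1 less_max_iff_disj)
    finally show ?thesis by (auto simp: TT_def r_def)
  qed
  have rid: "x \<in> TT m \<Longrightarrow> r x = x" for x
  proof
    fix i assume x: "x \<in> TT m"
    then have "(\<Sum>j<m. max (x j) 0) = (\<Sum>j<m. x j)" by (intro sum.cong) (auto simp: TT_def)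
    then have "max 1 (\<Sum>j<m. max (x j) 0) = 1" using x by (simp add: TT_def)
    then show "r x i = x i" using x by (auto simp: r_def TT_def)
  qed
  have rc: "continuous_on UNIV r"
  proof (rule continuous_on_coordinatewise_then_product)
    fix i
    have ci: "continuous_on UNIV (\<lambda>x::nat\<Rightarrow>real. x j)" for j by simp
    show "continuous_on UNIV (\<lambda>x. r x i)"
    proof (cases "i < m")
      case True
      have mx: "max 1 (a::real) \<noteq> 0" for a by (simp add: max_def)
      have "continuous_on UNIV (\<lambda>x::nat\<Rightarrow>real. max (x i) 0 / max 1 (\<Sum>j<m. max (x j) 0))"
        by (intro continuous_on_divide continuous_on_max continuous_on_sum ci continuous_on_const) (simp add: mx)
      then show ?thesis using True by (simp add: r_def)
    next
      case False
      then show ?thesis by (simp add: r_def)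
    qed
  qed
  define Bl where "Bl = {x::nat\<Rightarrow>real. (\<forall>i>m. x i = 0) \<and> (\<Sum>i\<le>m. (x i)^2) \<le> 1}"
  have c2: "continuous_on Bl (f \<circ> r)"
    by (rule continuous_on_compose[OF continuous_on_subset[OF rc] continuous_on_subset[OF contf]]) (auto simp: rT)
  have i2: "(f \<circ> r) ` Bl \<subseteq> Bl" using fim rT TT_ball unfolding Bl_def by fastforce
  obtain x where x: "x \<in> Bl" "f (r x) = x" using brouwer_ball_nat[OF c2[unfolded Bl_def] i2[unfolded Bl_def]] by (auto simp: Bl_def)
  have "x \<in> TT m" using x(2) fim rT by (metis image_subset_iff)
  then show ?thesis using x(2) rid by metis
qed

lemma compact_TT: "compact (TT m)"
proof -
  define C where "C = PiE UNIV (\<lambda>i::nat. if i < m then {0..1::real} else {0})"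
  have "compactin (product_topology (\<lambda>i. euclidean) UNIV) C"
    unfolding C_def compactin_PiE by auto
  then have cC: "compact C" by (simp add: euclidean_product_topology)
  have cl: "closed {x::nat\<Rightarrow>real. (\<Sum>i<m. x i) \<le> 1}"
    by (rule closed_Collect_le) (auto intro!: continuous_intros)
  have s1: "TT m \<subseteq> C \<inter> {x. (\<Sum>i<m. x i) \<le> 1}"
  proof
    fix x assume x: "x \<in> TT m"
    then show "x \<in> C \<inter> {x. (\<Sum>i<m. x i) \<le> 1}"
      using TT_le1[OF x] by (auto simp: C_def TT_def)
  qed
  have s2: "C \<inter> {x. (\<Sum>i<m. x i) \<le> 1} \<subseteq> TT m"
  proof
    fix x assume x: "x \<in> C \<inter> {x. (\<Sum>i<m. x i) \<le> 1}"
    have xi: "x i \<in> (if i < m then {0..1} else {0})" for i using x unfolding C_def by (blast intro: PiE_mem)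
    have a: "i < m \<Longrightarrow> 0 \<le> x i" for i using xi[of i] by simp
    have b: "m \<le> i \<Longrightarrow> x i = 0" for i using xi[of i] by simp
    show "x \<in> TT m" using a b x by (simp add: TT_def)
  qed
  have "TT m = C \<inter> {x. (\<Sum>i<m. x i) \<le> 1}" using s1 s2 by (rule equalityI)
  then show ?thesis using compact_Int_closed[OF cC cl] by simp
qed

lemma KKM_nat:
  fixes E :: "nat \<Rightarrow> (nat \<Rightarrow> real) set"
  assumes Esub: "\<And>k. k \<le> m \<Longrightarrow> E k \<subseteq> TT m"
    and Ecl: "\<And>k. k \<le> m \<Longrightarrow> closedin (top_of_set (TT m)) (E k)"
    and cov: "\<And>x. x \<in> TT m \<Longrightarrow> \<exists>k\<le>m. bw m k x > 0 \<and> x \<in> E k"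
  shows "\<exists>x\<in>TT m. \<forall>k\<le>m. x \<in> E k"
proof (rule ccontr)
  assume "\<not> ?thesis"
  then have nx: "\<And>x. x \<in> TT m \<Longrightarrow> \<exists>k\<le>m. x \<notin> E k" by blast
  have clT: "closed (TT m)" using compact_TT compact_imp_closed by blast
  have Ec: "k \<le> m \<Longrightarrow> closed (E k)" for k using closedin_closed_trans[OF Ecl clT] by blast
  define v where "v k = (\<lambda>i::nat. if 1 \<le> k \<and> i = k - 1 then 1 else (0::real))" for k
  have sv: "k \<le> m \<Longrightarrow> (\<Sum>i<m. v k i) = (if 1 \<le> k then 1 else 0)" for k
    by (cases "1 \<le> k") (auto simp: v_def)
  have vT: "k \<le> m \<Longrightarrow> v k \<in> TT m" for k
    using sv[of k] by (auto simp: TT_def v_def)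
  have bwv: "j \<le> m \<Longrightarrow> k \<le> m \<Longrightarrow> bw m j (v k) > 0 \<longleftrightarrow> j = k" for j k
    using sv[of k] by (auto simp: bw_def v_def)
  have Ene: "k \<le> m \<Longrightarrow> E k \<noteq> {}" for k
  proof -
    assume k: "k \<le> m"
    obtain j where "j \<le> m" "bw m j (v k) > 0" "v k \<in> E j" using cov[OF vT[OF k]] by blast
    then show ?thesis using bwv[OF _ k] by auto
  qed
  define d where "d k x = infdist x (E k)" for k x
  define Dn where "Dn x = (\<Sum>k\<le>m. d k x)" for x
  have dnn: "0 \<le> d k x" for k x by (simp add: d_def infdist_nonneg)
  have Dpos: "x \<in> TT m \<Longrightarrow> Dn x > 0" for x
  proof -
    assume x: "x \<in> TT m"
    obtain k where k: "k \<le> m" "x \<notin> E k" using nx[OF x] by blast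
    have "d k x \<noteq> 0" using k in_closed_iff_infdist_zero[OF Ec[OF k(1)] Ene[OF k(1)]] by (simp add: d_def)
    then have "0 < d k x" using dnn[of k x] by simp
    also have "d k x \<le> Dn x" unfolding Dn_def using k(1) dnn by (intro member_le_sum) auto
    finally show ?thesis .
  qed
  have Dsplit: "Dn x = d 0 x + (\<Sum>i<m. d (Suc i) x)" for x
    unfolding Dn_def by (rule sum.atMost_shift)
  define g where "g x = (\<lambda>i. if i < m then d (Suc i) x / Dn x else 0)" for x
  have gsum: "x \<in> TT m \<Longrightarrow> (\<Sum>i<m. g x i) = (\<Sum>i<m. d (Suc i) x) / Dn x" for x
    by (simp add: g_def sum_divide_distrib)
  have gT: "x \<in> TT m \<Longrightarrow> g x \<in> TT m" for x
  proof -
    assume x: "x \<in> TT m"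
    have "(\<Sum>i<m. d (Suc i) x) \<le> Dn x" using Dsplit[of x] dnn[of 0 x] by simp
    then have "(\<Sum>i<m. g x i) \<le> 1" using gsum[OF x] Dpos[OF x] by (simp add: divide_le_eq_1)
    then show ?thesis using Dpos[OF x] dnn by (auto simp: TT_def g_def)
  qed
  have gc: "continuous_on (TT m) g"
  proof (rule continuous_on_coordinatewise_then_product)
    fix i
    have cd: "continuous_on (TT m) (d k)" for k unfolding d_def
      by (intro continuous_intros continuous_on_id)
    have cD: "continuous_on (TT m) Dn" unfolding Dn_def
      by (intro continuous_on_sum cd)
    show "continuous_on (TT m) (\<lambda>x. g x i)"
    proof (cases "i < m")
      case True
      then show ?thesis unfolding g_def
        by (simp, intro continuous_on_divide cd cD) (fastforce dest: Dpos)
    next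
      case False
      then show ?thesis unfolding g_def by simp
    qed
  qed
  obtain x where x: "x \<in> TT m" "g x = x" using brouwer_TT[OF gc] gT by blast
  have bwd: "bw m k x = d k x / Dn x" if k: "k \<le> m" for k
  proof (cases "k = 0")
    case True
    have "bw m k x = 1 - (\<Sum>i<m. g x i)" using True x(2) by (simp add: bw_def)
    also have "\<dots> = (Dn x - (\<Sum>i<m. d (Suc i) x)) / Dn x"
      using gsum[OF x(1)] Dpos[OF x(1)] by (simp add: diff_divide_distrib)
    also have "\<dots> = d k x / Dn x" using Dsplit[of x] True by simp
    finally show ?thesis .
  next
    case False
    then have "k - 1 < m" "Suc (k - 1) = k" using k by auto
    then have "bw m k x = g x (k - 1)" using False x(2) by (simp add: bw_def)
    also have "\<dots> = d k x / Dn x" using \<open>k - 1 < m\<close> \<open>Suc (k - 1) = k\<close> by (simp add: g_def)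
    finally show ?thesis .
  qed
  obtain k where k: "k \<le> m" "bw m k x > 0" "x \<in> E k" using cov[OF x(1)] by blast
  have "d k x = 0" using k(3) by (simp add: d_def)
  then show False using k bwd[OF k(1)] by simp
qed

lemma tvs_add_cont:
  fixes f g :: "'a::topological_space \<Rightarrow> 'b::{real_vector,topological_space}"
  assumes X: "tvs TYPE('b)" and cf: "continuous_on S f" and cg: "continuous_on S g"
  shows "continuous_on S (\<lambda>x. f x + g x)"
proof -
  have h: "continuous_on UNIV (\<lambda>(u::'b, v). u + v)" using X by (simp add: tvs_def)
  show ?thesis using continuous_on_compose2[OF h continuous_on_Pair[OF cf cg]] by simp
qed

lemma tvs_scale_cont:
  fixes c :: "'a::topological_space \<Rightarrow> real" and v :: "'b::{real_vector,topological_space}"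
  assumes X: "tvs TYPE('b)" and cc: "continuous_on S c"
  shows "continuous_on S (\<lambda>x. c x *\<^sub>R v)"
proof -
  have h: "continuous_on UNIV (\<lambda>(a::real, u::'b). a *\<^sub>R u)" using X by (simp add: tvs_def)
  show ?thesis using continuous_on_compose2[OF h continuous_on_Pair[OF cc continuous_on_const[of S v]]] by simp
qed

lemma tvs_sum_cont:
  fixes h :: "'k \<Rightarrow> 'a::topological_space \<Rightarrow> 'b::{real_vector,topological_space}"
  assumes X: "tvs TYPE('b)" and fin: "finite K" and ch: "\<And>k. k \<in> K \<Longrightarrow> continuous_on S (h k)"
  shows "continuous_on S (\<lambda>x. \<Sum>k\<in>K. h k x)"
  using fin ch
proof (induction K rule: finite_induct)
  case empty
  then show ?case by simp
next
  case (insert k K)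
  have "continuous_on S (\<lambda>x. h k x + (\<Sum>k\<in>K. h k x))"
    using insert by (intro tvs_add_cont[OF X]) auto
  then show ?case using insert by simp
qed

lemma finite_KKM:
  fixes D :: "'x::{real_vector, topological_space} set"
    and F :: "'x \<Rightarrow> 'k \<Rightarrow> 'y::zero set"
    and G :: "'x \<Rightarrow> 'x \<Rightarrow> 'y set" and z :: "'k \<Rightarrow> 'x"
  assumes X: "tvs TYPE('x)" and Dc: "convex D" and ii: "KKM_type D G"
    and cc: "\<forall>y\<in>B. compactly_closed {x \<in> D. 0 \<in> F x y}"
    and zD: "\<forall>y\<in>B. z y \<in> D \<and> (\<forall>x\<in>D. 0 \<in> G (z y) x \<longrightarrow> 0 \<in> F x y)"
    and finB: "finite B" and neB: "B \<noteq> {}"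
  shows "\<exists>x\<in>D. \<forall>y\<in>B. 0 \<in> F x y"
proof -
  obtain b where b: "bij_betw b {0..<card B} B" using ex_bij_betw_nat_finite[OF finB] by blast
  define m where "m = card B - 1"
  have cB: "card B = Suc m" using finB neB by (simp add: m_def card_gt_0_iff)
  have rng: "{0..<card B} = {..m}" using cB by auto
  have bB: "k \<le> m \<Longrightarrow> b k \<in> B" for k using b rng by (auto simp: bij_betw_def)
  have bsurj: "y \<in> B \<Longrightarrow> \<exists>k\<le>m. b k = y" for y using b rng by (auto simp: bij_betw_def)
  define pts where "pts k = z (b k)" for k
  define \<phi> where "\<phi> x = (\<Sum>k\<le>m. bw m k x *\<^sub>R pts k)" for x
  have bwT: "x \<in> TT m \<Longrightarrow> k \<le> m \<Longrightarrow> 0 \<le> bw m k x" for x k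
    by (cases "k = 0") (auto simp: bw_def TT_def)
  have bwsum: "x \<in> TT m \<Longrightarrow> (\<Sum>k\<le>m. bw m k x) = 1" for x
    by (simp add: sum.atMost_shift bw_def)
  have ptsD: "k \<le> m \<Longrightarrow> pts k \<in> D" for k using zD bB by (simp add: pts_def)
  have \<phi>D: "x \<in> TT m \<Longrightarrow> \<phi> x \<in> D" for x
    unfolding \<phi>_def by (rule convex_sum) (auto simp: Dc bwsum bwT ptsD)
  define Sy where "Sy y = {x \<in> D. 0 \<in> F x y}" for y
  have cover: "\<exists>k\<le>m. bw m k x > 0 \<and> \<phi> x \<in> Sy (b k)" if x: "x \<in> TT m" for x
  proof -
    define I where "I = {k. k \<le> m \<and> bw m k x > 0}"
    have finI: "finite I" unfolding I_def by auto
    have IS: "I \<subseteq> {..m}" unfolding I_def by auto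
    have out0: "k \<in> {..m} - I \<Longrightarrow> bw m k x = 0" for k using bwT[OF x, of k] by (auto simp: I_def)
    have e1: "\<phi> x = (\<Sum>k\<in>I. bw m k x *\<^sub>R pts k)"
      unfolding \<phi>_def by (rule sum.mono_neutral_right) (use IS out0 in auto)
    have e2: "(\<Sum>k\<in>I. bw m k x) = 1"
      using bwsum[OF x] sum.mono_neutral_right[of "{..m}" I "\<lambda>k. bw m k x"] IS out0 by auto
    define A where "A = pts ` I"
    have "\<phi> x \<in> convex hull A"
      unfolding e1 by (rule convex_sum[OF finI convex_convex_hull e2]) (auto simp: I_def A_def hull_inc)
    moreover have "finite A" "A \<subseteq> D" using finI ptsD by (auto simp: A_def I_def)
    ultimately obtain a where a: "a \<in> A" "0 \<in> G a (\<phi> x)"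
      using ii \<phi>D[OF x] unfolding KKM_type_def by blast
    then obtain k where k: "k \<in> I" "a = pts k" by (auto simp: A_def)
    have "0 \<in> F (\<phi> x) (b k)" using zD bB[of k] k a \<phi>D[OF x] by (auto simp: pts_def I_def)
    then show ?thesis using k \<phi>D[OF x] by (auto simp: I_def Sy_def)
  qed
  have cbw: "continuous_on (TT m) (bw m k)" for k
  proof (cases "k = 0")
    case True
    have ci: "continuous_on (TT m) (\<lambda>x::nat\<Rightarrow>real. x j)" for j
      by (rule continuous_on_subset[OF continuous_on_product_coordinates]) auto
    show ?thesis using True unfolding bw_def by (simp, intro continuous_intros ci)
  next
    case False
    have "bw m k = (\<lambda>x. x (k - 1))" using False by (auto simp: bw_def)
    then show ?thesis using continuous_on_subset[OF continuous_on_product_coordinates] by auto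
  qed
  have c\<phi>: "continuous_on (TT m) \<phi>"
    unfolding \<phi>_def by (intro tvs_sum_cont[OF X] tvs_scale_cont[OF X] cbw) auto
  have cim: "compact (\<phi> ` TT m)" by (rule compact_continuous_image[OF c\<phi> compact_TT])
  define E where "E k = {x \<in> TT m. \<phi> x \<in> Sy (b k)}" for k
  have Ecl: "closedin (top_of_set (TT m)) (E k)" if k: "k \<le> m" for k
  proof -
    have "closedin (top_of_set (\<phi> ` TT m)) (Sy (b k) \<inter> \<phi> ` TT m)"
      using cc bB[OF k] cim unfolding compactly_closed_def Sy_def by blast
    from continuous_closedin_preimage_gen[OF c\<phi> _ this]
    have "closedin (top_of_set (TT m)) (TT m \<inter> \<phi> -` (Sy (b k) \<inter> \<phi> ` TT m))" by auto
    moreover have "TT m \<inter> \<phi> -` (Sy (b k) \<inter> \<phi> ` TT m) = E k" by (auto simp: E_def)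
    ultimately show ?thesis by simp
  qed
  obtain x where x: "x \<in> TT m" "\<forall>k\<le>m. x \<in> E k"
    using KKM_nat[of m E] Ecl cover by (auto simp: E_def)
  show ?thesis
  proof (intro bexI ballI)
    fix y assume "y \<in> B"
    then obtain k where "k \<le> m" "b k = y" using bsurj by blast
    then show "0 \<in> F (\<phi> x) y" using x by (auto simp: E_def Sy_def)
  qed (rule \<phi>D[OF x(1)])
qed

theorem theorem2p3:
  fixes D :: "'x::{real_vector, topological_space} set"
    and K :: "'k set"
    and F :: "'x \<Rightarrow> 'k \<Rightarrow> 'y::{real_vector, topological_space} set"
    and G :: "'x \<Rightarrow> 'x \<Rightarrow> 'y set"
    and M :: "'x set" and L :: "'k set"
  assumes X_tvs: "tvs TYPE('x)" and Y_tvs: "tvs TYPE('y)"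
    and D_ne: "D \<noteq> {}" and D_convex: "convex D" and K_ne: "K \<noteq> {}"
    and i: "\<forall>y\<in>K. compactly_closed {x \<in> D. 0 \<in> F x y}"
    and ii: "KKM_type D G"
    and iii: "\<forall>y\<in>K. \<exists>z\<in>D. \<forall>x\<in>D. 0 \<in> G z x \<longrightarrow> 0 \<in> F x y"
    and iv: "M \<noteq> {} \<and> compact M \<and> M \<subseteq> D \<and> finite L \<and> L \<subseteq> K \<and>
          (\<forall>x \<in> D - M. \<exists>y\<in>L. 0 \<notin> F x y)"
  shows "\<exists>xb\<in>M. \<forall>y\<in>K. 0 \<in> F xb y"
proof -
  have cM: "compact M" and MD: "M \<subseteq> D" and finL: "finite L" and LK: "L \<subseteq> K"
    and outM: "\<And>x. x \<in> D - M \<Longrightarrow> \<exists>y\<in>L. 0 \<notin> F x y" using iv by auto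
  obtain z where z: "\<forall>y\<in>K. z y \<in> D \<and> (\<forall>x\<in>D. 0 \<in> G (z y) x \<longrightarrow> 0 \<in> F x y)"
    using iii by metis
  obtain y0 where y0: "y0 \<in> K" using K_ne by blast
  define Sy where "Sy y = {x \<in> D. 0 \<in> F x y}" for y
  have "\<exists>C. closed C \<and> Sy y \<inter> M = M \<inter> C" if "y \<in> K" for y
    using i that cM unfolding compactly_closed_def Sy_def closedin_closed by blast
  then obtain Cl where Cl: "\<And>y. y \<in> K \<Longrightarrow> closed (Cl y) \<and> Sy y \<inter> M = M \<inter> Cl y" by metis
  have "M \<inter> \<Inter>(Cl ` K) \<noteq> {}"
  proof (rule compact_imp_fip[OF cM])
    show "\<And>T. T \<in> Cl ` K \<Longrightarrow> closed T" using Cl by auto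
  next
    fix F' assume F': "finite F'" "F' \<subseteq> Cl ` K"
    then obtain K' where K': "K' \<subseteq> K" "finite K'" "F' = Cl ` K'" using finite_subset_image by metis
    define B where "B = insert y0 (K' \<union> L)"
    have BK: "B \<subseteq> K" using K' LK y0 by (auto simp: B_def)
    have "\<exists>x\<in>D. \<forall>y\<in>B. 0 \<in> F x y"
      by (rule finite_KKM[OF X_tvs D_convex ii, of B F z]) (use BK i z K' finL in \<open>auto simp: B_def\<close>)
    then obtain x where x: "x \<in> D" "\<forall>y\<in>B. 0 \<in> F x y" by blast
    have xM: "x \<in> M"
    proof (rule ccontr)
      assume "x \<notin> M"
      then obtain y where "y \<in> L" "0 \<notin> F x y" using outM x(1) by blast
      then show False using x(2) by (auto simp: B_def)
    qed
    have "x \<in> Cl y" if "y \<in> K'" for y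
    proof -
      have "x \<in> Sy y \<inter> M" using x xM that by (auto simp: Sy_def B_def)
      then show ?thesis using Cl[of y] that K' by auto
    qed
    then show "M \<inter> \<Inter> F' \<noteq> {}" using xM K' by auto
  qed
  then obtain x where x: "x \<in> M" "\<And>y. y \<in> K \<Longrightarrow> x \<in> Cl y" by blast
  show ?thesis
  proof (intro bexI ballI)
    fix y assume y: "y \<in> K"
    then have "x \<in> Sy y \<inter> M" using Cl[OF y] x by auto
    then show "0 \<in> F x y" by (simp add: Sy_def)
  qed (rule x(1))
qed

end
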